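(* Consider an RBM with observed variables $X\in\{-1,1\}^n$ and width $\beta^*$ as in the context, and let $\gamma^*$ be the modified width of the MRF of the observed variables. Then $\gamma^*\le\beta^*$.
   Context: RBM: $\mathbb{P}(X=x,Y=y)\propto\exp(x^TJy+h^Tx+g^Ty)$ over observed $X\in\{-1,1\}^n$ and latent $Y\in\{-1,1\}^m$, $J\in\mathbb{R}^{n\times m}$, $h\in\mathbb{R}^n$, $g\in\mathbb{R}^m$. Its width is $\beta^*:=\max\big(\max_{i\in[n]}\sum_{j=1}^m|J_{i,j}|+|h_i|,\ \max_{j\in[m]}\sum_{i=1}^n|J_{i,j}|+|g_j|\big)$. The marginal of $X$ is $\propto\exp(f(x))$, $f(x)=\sum_j\rho(J_j\cdot x+g_j)+h^Tx$, $\rho(t)=\log(e^t+e^{-t})$, $J_j$ the $j$-th column of $J$; $f=\sum_{T\subseteq[n]}\hat f(T)\chi_T$, $\chi_T(x)=\prod_{i\in T}x_i$. The modified width is $\gamma^*:=\max_{u\in[n]}\max_{I\subseteq[n]\setminus\{u\}}\max_{x\in\{-1,1\}^n}\big|\sum_{T\subseteq I}\hat f(T\cup\{u\})\chi_{T\cup\{u\}}(x)\big|$. *)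

theory Defs
  imports Complex_Main "HOL-Library.FuncSet"
begin

text \<open>Observed variables are indexed by 0..<n, latent by 0..<m.
  J i j is the interaction between observed i and latent j.\<close>

definition rho :: "real \<Rightarrow> real" where
  "rho t = ln (exp t + exp (- t))"

definition cube :: "nat \<Rightarrow> (nat \<Rightarrow> real) set" where
  "cube n = PiE {..<n} (\<lambda>_. {-1, 1})"

definition chi :: "nat set \<Rightarrow> (nat \<Rightarrow> real) \<Rightarrow> real" where
  "chi T x = (\<Prod>i\<in>T. x i)"

text \<open>f(x) = sum_j rho(J_j . x + g_j) + h^T x (log of unnormalised marginal of X).\<close>
definition rbm_f :: "nat \<Rightarrow> nat \<Rightarrow> (nat \<Rightarrow> nat \<Rightarrow> real) \<Rightarrow> (nat \<Rightarrow> real) \<Rightarrow> (nat \<Rightarrow> real)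
    \<Rightarrow> (nat \<Rightarrow> real) \<Rightarrow> real" where
  "rbm_f n m J h g x =
     (\<Sum>j<m. rho ((\<Sum>i<n. J i j * x i) + g j)) + (\<Sum>i<n. h i * x i)"

definition fourier :: "nat \<Rightarrow> ((nat \<Rightarrow> real) \<Rightarrow> real) \<Rightarrow> nat set \<Rightarrow> real" where
  "fourier n F T = (\<Sum>x\<in>cube n. F x * chi T x) / 2 ^ n"

text \<open>Width beta*. The maximum is taken together with 0 (all entries are nonnegative),
  which only matters for the degenerate cases n = 0 or m = 0.\<close>
definition rbm_width :: "nat \<Rightarrow> nat \<Rightarrow> (nat \<Rightarrow> nat \<Rightarrow> real) \<Rightarrow> (nat \<Rightarrow> real) \<Rightarrow> (nat \<Rightarrow> real) \<Rightarrow> real" where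
  "rbm_width n m J h g =
     max (Max (insert 0 ((\<lambda>i. (\<Sum>j<m. \<bar>J i j\<bar>) + \<bar>h i\<bar>) ` {..<n})))
         (Max (insert 0 ((\<lambda>j. (\<Sum>i<n. \<bar>J i j\<bar>) + \<bar>g j\<bar>) ` {..<m})))"

text \<open>Modified width gamma* of the MRF exp(F) on {-1,1}^n (max taken together with 0, harmless
  since all entries are absolute values).\<close>
definition modified_width :: "nat \<Rightarrow> ((nat \<Rightarrow> real) \<Rightarrow> real) \<Rightarrow> real" where
  "modified_width n F =
     Max (insert 0 {\<bar>\<Sum>T\<in>Pow I. fourier n F (insert u T) * chi (insert u T) x\<bar> |
                    u I x. u < n \<and> I \<subseteq> {..<n} - {u} \<and> x \<in> cube n})"

end

theory Submission
  imports Defs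
begin

lemma rho_shift: "rho (a + d) \<le> rho a + \<bar>d\<bar>"
proof -
  have e1: "exp (a + d) \<le> exp \<bar>d\<bar> * exp a"
    by (simp add: exp_add[symmetric])
  have e2: "exp (- (a + d)) \<le> exp \<bar>d\<bar> * exp (- a)"
    by (simp add: exp_add[symmetric])
  have "exp (a + d) + exp (- (a + d)) \<le> exp \<bar>d\<bar> * (exp a + exp (- a))"
    using e1 e2 by (simp add: distrib_left)
  moreover have pos: "exp a + exp (- a) > 0" by (simp add: add_pos_pos)
  moreover have pos2: "exp (a + d) + exp (- (a + d)) > 0" by (simp add: add_pos_pos)
  ultimately have "ln (exp (a + d) + exp (- (a + d))) \<le> ln (exp \<bar>d\<bar> * (exp a + exp (- a)))"
    by simp
  also have "\<dots> = \<bar>d\<bar> + ln (exp a + exp (- a))"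
    using pos by (simp add: ln_mult)
  finally show ?thesis unfolding rho_def by simp
qed

lemma rho_lip: "\<bar>rho a - rho b\<bar> \<le> \<bar>a - b\<bar>"
  using rho_shift[of b "a - b"] rho_shift[of a "b - a"] by auto

lemma cube_vals: "y \<in> cube n \<Longrightarrow> i < n \<Longrightarrow> y i = -1 \<or> y i = 1"
  unfolding cube_def by (auto simp: PiE_def Pi_def)

lemma finite_cube: "finite (cube n)"
  unfolding cube_def by (rule finite_PiE) auto

lemma sum_upd:
  fixes u n :: nat and c y :: "nat \<Rightarrow> real"
  assumes "u < n"
  shows "(\<Sum>i<n. c i * (y(u := v)) i) = (\<Sum>i<n. c i * y i) + c u * (v - y u)"
proof -
  have u: "u \<in> {..<n}" using assms by simp
  have "(\<Sum>i<n. c i * (y(u := v)) i) = c u * v + (\<Sum>i\<in>{..<n} - {u}. c i * (y(u := v)) i)"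
    using sum.remove[of "{..<n}" u "\<lambda>i. c i * (y(u := v)) i"] u by simp
  also have "(\<Sum>i\<in>{..<n} - {u}. c i * (y(u := v)) i) = (\<Sum>i\<in>{..<n} - {u}. c i * y i)"
    by (rule sum.cong) auto
  also have "(\<Sum>i<n. c i * y i) = c u * y u + (\<Sum>i\<in>{..<n} - {u}. c i * y i)"
    using sum.remove[of "{..<n}" u "\<lambda>i. c i * y i"] u by simp
  ultimately show ?thesis by (simp add: algebra_simps)
qed

lemma flip_diff:
  assumes "u < n" "y \<in> cube n"
  shows "\<bar>rbm_f n m J h g y - rbm_f n m J h g (y(u := - y u))\<bar>
          \<le> 2 * ((\<Sum>j<m. \<bar>J u j\<bar>) + \<bar>h u\<bar>)"
proof -
  have yu: "\<bar>y u\<bar> = 1" using cube_vals[OF assms(2) assms(1)] by auto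
  have A: "\<And>j. (\<Sum>i<n. J i j * (y(u := - y u)) i) = (\<Sum>i<n. J i j * y i) - 2 * J u j * y u"
    using sum_upd[OF assms(1), of "\<lambda>i. J i j" y "- y u" for j] by simp
  have H: "(\<Sum>i<n. h i * (y(u := - y u)) i) = (\<Sum>i<n. h i * y i) - 2 * h u * y u"
    using sum_upd[OF assms(1), of h y "- y u"] by simp
  have eq: "rbm_f n m J h g y - rbm_f n m J h g (y(u := - y u)) =
     (\<Sum>j<m. rho ((\<Sum>i<n. J i j * y i) + g j) - rho ((\<Sum>i<n. J i j * y i) - 2 * J u j * y u + g j))
     + 2 * h u * y u"
    unfolding rbm_f_def A H by (simp add: sum_subtractf)
  have "\<bar>(\<Sum>j<m. rho ((\<Sum>i<n. J i j * y i) + g j) - rho ((\<Sum>i<n. J i j * y i) - 2 * J u j * y u + g j))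
     + 2 * h u * y u\<bar> \<le> (\<Sum>j<m. \<bar>rho ((\<Sum>i<n. J i j * y i) + g j) - rho ((\<Sum>i<n. J i j * y i) - 2 * J u j * y u + g j)\<bar>) + \<bar>2 * h u * y u\<bar>"
    by (rule order_trans[OF abs_triangle_ineq add_right_mono[OF sum_abs]])
  also have "\<dots> \<le> (\<Sum>j<m. 2 * \<bar>J u j\<bar>) + 2 * \<bar>h u\<bar>"
  proof (intro add_mono sum_mono)
    fix j
    have "\<bar>rho ((\<Sum>i<n. J i j * y i) + g j) - rho ((\<Sum>i<n. J i j * y i) - 2 * J u j * y u + g j)\<bar>
        \<le> \<bar>2 * J u j * y u\<bar>"
      using rho_lip[of "(\<Sum>i<n. J i j * y i) + g j" "(\<Sum>i<n. J i j * y i) - 2 * J u j * y u + g j"]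
      by simp
    thus "\<bar>rho ((\<Sum>i<n. J i j * y i) + g j) - rho ((\<Sum>i<n. J i j * y i) - 2 * J u j * y u + g j)\<bar>
        \<le> 2 * \<bar>J u j\<bar>" using yu by (simp add: abs_mult)
  next
    show "\<bar>2 * h u * y u\<bar> \<le> 2 * \<bar>h u\<bar>" using yu by (simp add: abs_mult)
  qed
  also have "\<dots> = 2 * ((\<Sum>j<m. \<bar>J u j\<bar>) + \<bar>h u\<bar>)"
    by (simp add: sum_distrib_left distrib_left)
  finally show ?thesis unfolding eq .
qed


lemma flip_cube:
  assumes "u < n" "y \<in> cube n"
  shows "y(u := - y u) \<in> cube n"
  using assms cube_vals[OF assms(2)] unfolding cube_def
  by (auto simp: PiE_def Pi_def extensional_def)

lemma chi_pair:
  assumes "finite T" "u \<notin> T"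
  shows "chi (insert u T) y * chi (insert u T) x = y u * x u * (\<Prod>i\<in>T. y i * x i)"
  using assms unfolding chi_def by (simp add: prod.distrib algebra_simps)

lemma pow_sum:
  fixes y x :: "nat \<Rightarrow> real"
  assumes "finite I" "u \<notin> I"
  shows "(\<Sum>T\<in>Pow I. chi (insert u T) y * chi (insert u T) x)
         = y u * x u * (\<Prod>i\<in>I. 1 + y i * x i)"
proof -
  have "(\<Sum>T\<in>Pow I. chi (insert u T) y * chi (insert u T) x)
      = (\<Sum>T\<in>Pow I. y u * x u * ((\<Prod>i\<in>T. y i * x i) * (\<Prod>i\<in>I - T. 1)))"
  proof (rule sum.cong[OF refl])
    fix T assume "T \<in> Pow I"
    hence "finite T" "u \<notin> T" using assms finite_subset by auto
    thus "chi (insert u T) y * chi (insert u T) x = y u * x u * ((\<Prod>i\<in>T. y i * x i) * (\<Prod>i\<in>I - T. 1))"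
      by (simp add: chi_pair)
  qed
  also have "\<dots> = y u * x u * (\<Sum>T\<in>Pow I. (\<Prod>i\<in>T. y i * x i) * (\<Prod>i\<in>I - T. 1))"
    by (simp add: sum_distrib_left)
  also have "(\<Sum>T\<in>Pow I. (\<Prod>i\<in>T. y i * x i) * (\<Prod>i\<in>I - T. (1::real))) = (\<Prod>i\<in>I. y i * x i + 1)"
    using prod_add[OF assms(1), of "\<lambda>i. y i * x i" "\<lambda>_. 1"] by simp
  finally show ?thesis by (simp add: add.commute)
qed

lemma sum_w:
  fixes x :: "nat \<Rightarrow> real"
  assumes "I \<subseteq> {..<n}"
  shows "(\<Sum>y\<in>cube n. \<Prod>i\<in>I. 1 + y i * x i) = 2 ^ n"
proof -
  define f where "f i t = (if i \<in> I then 1 + t * x i else (1::real))" for i t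
  have "\<And>y. (\<Prod>i\<in>I. 1 + y i * x i) = (\<Prod>i<n. f i (y i))"
  proof -
    fix y :: "nat \<Rightarrow> real"
    show "(\<Prod>i\<in>I. 1 + y i * x i) = (\<Prod>i<n. f i (y i))"
      by (rule prod.mono_neutral_cong_right[symmetric]) (use assms in \<open>auto simp: f_def\<close>)
  qed
  hence "(\<Sum>y\<in>cube n. \<Prod>i\<in>I. 1 + y i * x i) = (\<Sum>y\<in>PiE {..<n} (\<lambda>_. {-1, 1}). \<Prod>i<n. f i (y i))"
    unfolding cube_def by simp
  also have "\<dots> = (\<Prod>i<n. \<Sum>t\<in>{-1, 1}. f i t)"
    by (rule prod_sum_PiE[symmetric]) auto
  also have "\<dots> = (\<Prod>i<n. 2)"
    by (intro prod.cong refl) (simp add: f_def)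
  finally show ?thesis by simp
qed

lemma key:
  fixes F :: "(nat \<Rightarrow> real) \<Rightarrow> real"
  assumes u: "u < n" and I: "I \<subseteq> {..<n} - {u}" and x: "x \<in> cube n"
    and B: "\<And>y. y \<in> cube n \<Longrightarrow> \<bar>F y - F (y(u := - y u))\<bar> \<le> 2 * B"
  shows "\<bar>\<Sum>T\<in>Pow I. fourier n F (insert u T) * chi (insert u T) x\<bar> \<le> B"
proof -
  have fI: "finite I" using I finite_subset by blast
  have uI: "u \<notin> I" using I by auto
  define w where "w y = (\<Prod>i\<in>I. 1 + y i * x i)" for y :: "nat \<Rightarrow> real"
  define fl where "fl y = y(u := - y u)" for y :: "nat \<Rightarrow> real"
  have xu: "\<bar>x u\<bar> = 1" using cube_vals[OF x u] by auto
  have wpos: "w y \<ge> 0" if "y \<in> cube n" for y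
    unfolding w_def
  proof (rule prod_nonneg)
    fix i assume "i \<in> I"
    hence "i < n" using I by auto
    thus "0 \<le> 1 + y i * x i" using cube_vals[OF that] cube_vals[OF x] by fastforce
  qed
  have wfl: "w (fl y) = w y" for y
    unfolding w_def fl_def using uI by (intro prod.cong refl) auto
  have flu: "fl y u = - y u" for y unfolding fl_def by simp
  define S where "S = (\<Sum>y\<in>cube n. F y * (y u * x u * w y))"
  have LHS: "(\<Sum>T\<in>Pow I. fourier n F (insert u T) * chi (insert u T) x) = S / 2 ^ n"
  proof -
    have "(\<Sum>T\<in>Pow I. fourier n F (insert u T) * chi (insert u T) x)
       = (\<Sum>T\<in>Pow I. \<Sum>y\<in>cube n. F y * (chi (insert u T) y * chi (insert u T) x)) / 2 ^ n"
      unfolding fourier_def sum_divide_distrib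
      by (intro sum.cong refl) (simp add: sum_distrib_left sum_distrib_right mult_ac)
    also have "(\<Sum>T\<in>Pow I. \<Sum>y\<in>cube n. F y * (chi (insert u T) y * chi (insert u T) x))
       = (\<Sum>y\<in>cube n. F y * (\<Sum>T\<in>Pow I. chi (insert u T) y * chi (insert u T) x))"
      by (subst sum.swap) (simp add: sum_distrib_left)
    also have "\<dots> = S"
      unfolding S_def w_def using pow_sum[OF fI uI] by simp
    finally show ?thesis .
  qed
  have bij: "bij_betw fl (cube n) (cube n)"
    by (rule bij_betw_byWitness[where f' = fl]) (auto simp: fl_def flip_cube[OF u])
  have S2: "S = (\<Sum>y\<in>cube n. F (fl y) * (fl y u * x u * w (fl y)))"
    unfolding S_def using sum.reindex_bij_betw[OF bij, of "\<lambda>y. F y * (y u * x u * w y)"] by simp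
  have "2 * S = (\<Sum>y\<in>cube n. (F y - F (fl y)) * (y u * x u * w y))"
  proof -
    have "2 * S = S + S" by simp
    also have "\<dots> = (\<Sum>y\<in>cube n. F y * (y u * x u * w y)) + (\<Sum>y\<in>cube n. F (fl y) * (fl y u * x u * w (fl y)))"
      using S2 unfolding S_def by simp
    also have "\<dots> = (\<Sum>y\<in>cube n. (F y - F (fl y)) * (y u * x u * w y))"
      by (simp add: sum.distrib[symmetric] flu wfl algebra_simps)
    finally show ?thesis .
  qed
  hence "\<bar>2 * S\<bar> \<le> (\<Sum>y\<in>cube n. \<bar>(F y - F (fl y)) * (y u * x u * w y)\<bar>)"
    by (simp only: sum_abs)
  also have "\<dots> \<le> (\<Sum>y\<in>cube n. 2 * B * w y)"
  proof (rule sum_mono)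
    fix y assume y: "y \<in> cube n"
    have yu: "\<bar>y u\<bar> = 1" using cube_vals[OF y u] by auto
    have "\<bar>(F y - F (fl y)) * (y u * x u * w y)\<bar> = \<bar>F y - F (fl y)\<bar> * w y"
      using yu xu wpos[OF y] by (simp add: abs_mult)
    also have "\<dots> \<le> 2 * B * w y"
      using B[OF y] wpos[OF y] unfolding fl_def by (rule mult_right_mono)
    finally show "\<bar>(F y - F (fl y)) * (y u * x u * w y)\<bar> \<le> 2 * B * w y" .
  qed
  also have "\<dots> = 2 * B * 2 ^ n"
    using sum_w[of I n x] I unfolding w_def by (auto simp: sum_distrib_left[symmetric])
  finally have "\<bar>S\<bar> \<le> B * 2 ^ n" by simp
  thus ?thesis unfolding LHS by (simp add: divide_le_eq)
qed

theorem lemma24: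
  fixes n m :: nat and J :: "nat \<Rightarrow> nat \<Rightarrow> real" and h g :: "nat \<Rightarrow> real"
  shows "modified_width n (rbm_f n m J h g) \<le> rbm_width n m J h g"
proof -
  let ?F = "rbm_f n m J h g"
  let ?A = "{\<bar>\<Sum>T\<in>Pow I. fourier n ?F (insert u T) * chi (insert u T) x\<bar> |
                    u I x. u < n \<and> I \<subseteq> {..<n} - {u} \<and> x \<in> cube n}"
  have fin: "finite ?A"
  proof (rule finite_subset)
    show "?A \<subseteq> (\<lambda>(u, I, x). \<bar>\<Sum>T\<in>Pow I. fourier n ?F (insert u T) * chi (insert u T) x\<bar>)
                 ` ({..<n} \<times> Pow {..<n} \<times> cube n)" by force
    show "finite \<dots>" using finite_cube by simp
  qed
  let ?W1 = "Max (insert 0 ((\<lambda>i. (\<Sum>j<m. \<bar>J i j\<bar>) + \<bar>h i\<bar>) ` {..<n}))"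
  let ?W2 = "Max (insert 0 ((\<lambda>j. (\<Sum>i<n. \<bar>J i j\<bar>) + \<bar>g j\<bar>) ` {..<m}))"
  have W1: "?W1 \<le> rbm_width n m J h g" unfolding rbm_width_def by simp
  have W10: "0 \<le> ?W1" by (rule Max_ge) auto
  have W1u: "(\<Sum>j<m. \<bar>J u j\<bar>) + \<bar>h u\<bar> \<le> ?W1" if "u < n" for u
    by (rule Max_ge) (use that in auto)
  show ?thesis
    unfolding modified_width_def
  proof (subst Max_le_iff, simp add: fin, simp, intro ballI)
    fix a assume "a \<in> insert 0 ?A"
    then show "a \<le> rbm_width n m J h g"
    proof
      assume "a = 0" thus ?thesis using W1 W10 by linarith
    next
      assume "a \<in> ?A"
      then obtain u I x where a: "a = \<bar>\<Sum>T\<in>Pow I. fourier n ?F (insert u T) * chi (insert u T) x\<bar>"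
        and u: "u < n" and I: "I \<subseteq> {..<n} - {u}" and x: "x \<in> cube n" by blast
      have "a \<le> (\<Sum>j<m. \<bar>J u j\<bar>) + \<bar>h u\<bar>"
        unfolding a by (rule key[OF u I x]) (rule flip_diff[OF u])
      thus ?thesis using W1u[OF u] W1 by linarith
    qed
  qed
qed

end
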